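(* Let $n\ge 2$, let $\Omega\subset\mathbb R^n$ be a bounded convex domain, and let $M>0$. Let $u\in C(\overline{\Omega})$ be convex with $u=0$ on $\partial\Omega$ and $\det D^2u\le M\operatorname{dist}^{n-2}(\cdot,\partial\Omega)$ in $\Omega$ in the sense of Aleksandrov. Then there is $C=C(\Omega,M)>0$ such that $$|u(x)|\le C\operatorname{dist}(x,\partial\Omega)\big(1+|\log\operatorname{dist}(x,\partial\Omega)|\big)\quad\text{for all }x\in\Omega.$$
   Context: For a convex function $u$ on $\Omega$, its Monge–Ampère measure is $Mu(E)=|\partial u(E)|$ for Borel $E\subset\Omega$, where $\partial u(x)=\{p\in\mathbb R^n: u(y)\ge u(x)+p\cdot(y-x)\ \forall y\in\Omega\}$. The inequality $\det D^2u\le g$ in the sense of Aleksandrov means $Mu\le g\,dx$ as Borel measures. $\operatorname{dist}(x,\partial\Omega)$ is the Euclidean distance to the boundary. *)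

theory Defs
  imports "HOL-Analysis.Analysis"
begin

definition subdiff :: "('a::euclidean_space \<Rightarrow> real) \<Rightarrow> 'a set \<Rightarrow> 'a \<Rightarrow> 'a set" where
  "subdiff u \<Omega> x = {p. \<forall>y\<in>\<Omega>. u y \<ge> u x + inner p (y - x)}"

definition MA_measure :: "('a::euclidean_space \<Rightarrow> real) \<Rightarrow> 'a set \<Rightarrow> 'a set \<Rightarrow> ennreal" where
  "MA_measure u \<Omega> E = emeasure lebesgue (\<Union>x\<in>E. subdiff u \<Omega> x)"

definition aleksandrov_det_le :: "('a::euclidean_space \<Rightarrow> real) \<Rightarrow> 'a set \<Rightarrow> ('a \<Rightarrow> real) \<Rightarrow> bool" where
  "aleksandrov_det_le u \<Omega> g \<longleftrightarrow>
     (\<forall>E. E \<in> sets borel \<and> E \<subseteq> \<Omega> \<longrightarrow>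
        MA_measure u \<Omega> E \<le> (\<integral>\<^sup>+ x\<in>E. ennreal (g x) \<partial>lebesgue))"

end

theory Submission
  imports Defs
begin

lemma ev01: "\<forall>\<^sub>F e in at_right (0::real). 0 < e \<and> e \<le> 1"
  by (rule eventually_mono[OF eventually_at_right_real[of 0 1]]) auto

locale MAset =
  fixes \<Omega> :: "'a::euclidean_space set" and u :: "'a \<Rightarrow> real"
  assumes opn: "open \<Omega>" and cvx: "convex \<Omega>" and bdd: "bounded \<Omega>" and ne: "\<Omega> \<noteq> {}"
    and cont: "continuous_on (closure \<Omega>) u" and cvxu: "convex_on \<Omega> u"
    and bd0: "\<forall>x\<in>frontier \<Omega>. u x = 0"
begin

abbreviation "dO x \<equiv> infdist x (frontier \<Omega>)"

lemma fr_ne: "frontier \<Omega> \<noteq> {}"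
  using ne bdd frontier_not_empty not_bounded_UNIV by blast

lemma fr_notin: "z \<in> frontier \<Omega> \<Longrightarrow> z \<notin> \<Omega>"
  using opn by (simp add: frontier_def interior_open)

lemma ball_sub:
  assumes x: "x \<in> \<Omega>" and "dist x y < dO x" shows "y \<in> \<Omega>"
proof (rule ccontr)
  assume "y \<notin> \<Omega>"
  then have "closed_segment x y \<inter> frontier \<Omega> \<noteq> {}"
    using connected_Int_frontier[of "closed_segment x y" \<Omega>] x by auto
  then obtain w where w: "w \<in> closed_segment x y" "w \<in> frontier \<Omega>" by auto
  have "dO x \<le> dist x w" using w infdist_le by blast
  also have "\<dots> \<le> dist x y" using w(1) by (simp add: dist_commute dist_in_closed_segment)
  finally show False using assms by simp
qed

lemma d_pos: "x \<in> \<Omega> \<Longrightarrow> dO x > 0"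
  using fr_notin infdist_pos_not_in_closed[of "frontier \<Omega>" x] fr_ne by auto

lemma nearest: assumes "x \<in> \<Omega>" obtains z where "z \<in> frontier \<Omega>" "dist x z = dO x"
  using infdist_attains_inf[OF frontier_closed fr_ne] by metis

lemma closure_eq: "closure \<Omega> = \<Omega> \<union> frontier \<Omega>"
  using opn closure_subset by (auto simp: frontier_def interior_open)

lemma cvx_cl:
  assumes x: "x \<in> closure \<Omega>" and y: "y \<in> closure \<Omega>" and t: "0 \<le> t" "t \<le> 1"
  shows "u ((1-t) *\<^sub>R x + t *\<^sub>R y) \<le> (1-t) * u x + t * u y"
proof -
  obtain c where c: "c \<in> \<Omega>" using ne by auto
  have ci: "c \<in> interior \<Omega>" using c opn by (simp add: interior_open)
  define xs where "xs e = x - e *\<^sub>R (x - c)" for e::real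
  define ys where "ys e = y - e *\<^sub>R (y - c)" for e::real
  have inO: "xs e \<in> \<Omega> \<and> ys e \<in> \<Omega>" if "0 < e" "e \<le> 1" for e
    using mem_interior_closure_convex_shrink[OF cvx ci x that] mem_interior_closure_convex_shrink[OF cvx ci y that]
      opn by (simp add: xs_def ys_def interior_open)
  have ev: "\<forall>\<^sub>F e in at_right 0. u ((1-t) *\<^sub>R xs e + t *\<^sub>R ys e) \<le> (1-t) * u (xs e) + t * u (ys e)"
  proof -
    have "\<forall>\<^sub>F e in at_right (0::real). 0 < e \<and> e \<le> 1" by (rule ev01)
    then show ?thesis
    proof (rule eventually_mono)
      fix e :: real assume "0 < e \<and> e \<le> 1"
      then show "u ((1-t) *\<^sub>R xs e + t *\<^sub>R ys e) \<le> (1-t) * u (xs e) + t * u (ys e)"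
        using inO[of e] convex_onD[OF cvxu, of t "xs e" "ys e"] t by auto
    qed
  qed
  have evin: "\<forall>\<^sub>F e in at_right 0. xs e \<in> closure \<Omega> \<and> ys e \<in> closure \<Omega> \<and> (1-t) *\<^sub>R xs e + t *\<^sub>R ys e \<in> closure \<Omega>"
  proof -
    have "\<forall>\<^sub>F e in at_right (0::real). 0 < e \<and> e \<le> 1" by (rule ev01)
    then show ?thesis
    proof (rule eventually_mono)
      fix e :: real assume e: "0 < e \<and> e \<le> 1"
      then have "xs e \<in> \<Omega>" "ys e \<in> \<Omega>" using inO by auto
      moreover have "(1-t) *\<^sub>R xs e + t *\<^sub>R ys e \<in> \<Omega>"
        using convexD_alt[OF cvx \<open>xs e \<in> \<Omega>\<close> \<open>ys e \<in> \<Omega>\<close>] t by (simp add: convexD)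
      ultimately show "xs e \<in> closure \<Omega> \<and> ys e \<in> closure \<Omega> \<and> (1-t) *\<^sub>R xs e + t *\<^sub>R ys e \<in> closure \<Omega>"
        using closure_subset by blast
    qed
  qed
  have lx: "(xs \<longlongrightarrow> x) (at_right 0)" unfolding xs_def
    by (auto intro!: tendsto_eq_intros)
  have ly: "(ys \<longlongrightarrow> y) (at_right 0)" unfolding ys_def
    by (auto intro!: tendsto_eq_intros)
  have lxy: "((\<lambda>e. (1-t) *\<^sub>R xs e + t *\<^sub>R ys e) \<longlongrightarrow> (1-t) *\<^sub>R x + t *\<^sub>R y) (at_right 0)"
    by (auto intro!: tendsto_eq_intros lx ly)
  have cxy: "(1-t) *\<^sub>R x + t *\<^sub>R y \<in> closure \<Omega>"
    using convex_closure[OF cvx] x y t by (simp add: convexD)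
  have l1: "((\<lambda>e. u ((1-t) *\<^sub>R xs e + t *\<^sub>R ys e)) \<longlongrightarrow> u ((1-t) *\<^sub>R x + t *\<^sub>R y)) (at_right 0)"
    by (rule continuous_on_tendsto_compose[OF cont lxy cxy]) (use evin in \<open>auto elim: eventually_mono\<close>)
  have l2: "((\<lambda>e. (1-t) * u (xs e) + t * u (ys e)) \<longlongrightarrow> (1-t) * u x + t * u y) (at_right 0)"
  proof (intro tendsto_intros)
    show "((\<lambda>e. u (xs e)) \<longlongrightarrow> u x) (at_right 0)"
      by (rule continuous_on_tendsto_compose[OF cont lx x]) (use evin in \<open>auto elim: eventually_mono\<close>)
    show "((\<lambda>e. u (ys e)) \<longlongrightarrow> u y) (at_right 0)"
      by (rule continuous_on_tendsto_compose[OF cont ly y]) (use evin in \<open>auto elim: eventually_mono\<close>)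
  qed
  show ?thesis using tendsto_le[OF _ l2 l1 ev] by simp
qed

lemma u_nonpos: assumes x: "x \<in> \<Omega>" shows "u x \<le> 0"
proof -
  obtain z where z: "z \<in> frontier \<Omega>" "dist x z = dO x" using nearest[OF x] by metis
  define v where "v = x - z"
  have vne: "v \<noteq> 0" using z fr_notin x by (auto simp: v_def)
  obtain B where B: "\<forall>y\<in>\<Omega>. norm y \<le> B" using bdd by (auto simp: bounded_iff)
  define S where "S = (B + norm x + 1) / norm v"
  define e where "e = x + S *\<^sub>R v"
  have "norm e \<ge> S * norm v - norm x"
    using norm_triangle_ineq2[of "S *\<^sub>R v" "-x"] 
    by (simp add: e_def add.commute) (smt (verit) abs_ge_self mult_right_mono norm_ge_zero)
  moreover have "S * norm v = B + norm x + 1" using vne by (simp add: S_def)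
  ultimately have "norm e > B" by simp
  then have "e \<notin> \<Omega>" using B by force
  then have "closed_segment x e \<inter> frontier \<Omega> \<noteq> {}"
    using connected_Int_frontier[of "closed_segment x e" \<Omega>] x by auto
  then obtain w where w: "w \<in> closed_segment x e" "w \<in> frontier \<Omega>" by auto
  then obtain \<mu> where mu: "0 \<le> \<mu>" "\<mu> \<le> 1" "w = (1-\<mu>) *\<^sub>R x + \<mu> *\<^sub>R e"
    by (auto simp: closed_segment_def)
  have "B \<ge> 0" using B x norm_ge_zero order_trans by blast
  then have Spos: "S > 0" using vne by (auto simp: S_def intro!: divide_pos_pos add_nonneg_pos)
  have "\<mu> \<noteq> 0" using mu w x fr_notin by auto
  define s where "s = \<mu> * S"
  have spos: "s > 0" using mu \<open>\<mu> \<noteq> 0\<close> Spos by (simp add: s_def)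
  have weq: "w = x + s *\<^sub>R v" by (simp add: mu e_def s_def algebra_simps)
  define t where "t = s / (1 + s)"
  have t01: "0 \<le> t" "t \<le> 1" using spos by (auto simp: t_def)
  have "(1 - t) *\<^sub>R w + t *\<^sub>R z = x"
  proof -
    have "(1 + s) *\<^sub>R ((1 - t) *\<^sub>R w + t *\<^sub>R z) = (1 + s) *\<^sub>R x"
      using spos by (simp add: t_def weq v_def algebra_simps divide_simps)
    then show ?thesis using spos by simp
  qed
  moreover have "w \<in> closure \<Omega>" "z \<in> closure \<Omega>" using w z closure_eq by auto
  ultimately have "u x \<le> (1-t) * u w + t * u z" using cvx_cl[of w z t] t01 by simp
  also have "\<dots> = 0" using bd0 w z by simp
  finally show ?thesis .
qed

lemma normal:
  assumes x0: "x0 \<in> \<Omega>"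
  obtains \<nu> where "norm \<nu> = 1" "\<forall>y\<in>closure \<Omega>. \<nu> \<bullet> (y - x0) \<le> dO x0"
    "\<forall>y\<in>\<Omega>. \<nu> \<bullet> (y - x0) < dO x0"
proof -
  obtain z where z: "z \<in> frontier \<Omega>" "dist x0 z = dO x0" using nearest[OF x0] by metis
  obtain a b where ab: "a \<noteq> 0" "\<forall>x\<in>\<Omega>. inner a x \<le> b" "\<forall>x\<in>{z}. inner a x \<ge> b"
    using separating_hyperplane_sets[of \<Omega> "{z}"] cvx ne fr_notin[OF z(1)] by auto
  define \<nu> where "\<nu> = a /\<^sub>R norm a"
  have n1: "norm \<nu> = 1" using ab by (simp add: \<nu>_def)
  have le: "\<nu> \<bullet> y \<le> \<nu> \<bullet> z" if "y \<in> \<Omega>" for y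
  proof -
    have "inner a y \<le> inner a z" using ab that by force
    then show ?thesis using ab by (simp add: \<nu>_def divide_right_mono)
  qed
  define d where "d = dO x0"
  have dpos: "d > 0" using d_pos[OF x0] by (simp add: d_def)
  have step: "\<nu> \<bullet> x0 + t \<le> \<nu> \<bullet> z" if "0 \<le> t" "t < d" for t
  proof -
    have "x0 + t *\<^sub>R \<nu> \<in> \<Omega>" using ball_sub[OF x0, of "x0 + t *\<^sub>R \<nu>"] that n1 by (simp add: dist_norm d_def)
    then show ?thesis using le[of "x0 + t *\<^sub>R \<nu>"] n1 by (simp add: inner_add_right power2_norm_eq_inner[symmetric])
  qed
  have hz: "\<nu> \<bullet> x0 + d \<le> \<nu> \<bullet> z"
  proof (rule ccontr)
    assume nt: "\<not> ?thesis"
    define \<delta> where "\<delta> = \<nu> \<bullet> x0 + d - \<nu> \<bullet> z"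
    have dp: "\<delta> > 0" using nt by (simp add: \<delta>_def)
    have "\<nu> \<bullet> x0 + max 0 (d - \<delta>/2) \<le> \<nu> \<bullet> z" using step[of "max 0 (d - \<delta>/2)"] dpos dp by simp
    moreover have "\<And>(A::real) (Z::real) (d::real). A + max 0 (d - (A + d - Z)/2) \<le> Z \<Longrightarrow> 0 < A + d - Z \<Longrightarrow> 0 < d \<Longrightarrow> False"
      by (auto simp: max_def field_simps split: if_splits)
    ultimately show False using dp dpos unfolding \<delta>_def by blast
  qed
  have "\<nu> \<bullet> (z - x0) \<le> norm \<nu> * norm (z - x0)" by (rule norm_cauchy_schwarz)
  then have zx: "\<nu> \<bullet> (z - x0) \<le> d" using n1 z by (simp add: d_def dist_norm norm_minus_commute)
  have inO: "\<nu> \<bullet> (y - x0) \<le> d" if "y \<in> \<Omega>" for y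
    using le[OF that] zx hz by (simp add: inner_diff_right)
  have "closure \<Omega> \<subseteq> {y. \<nu> \<bullet> (y - x0) \<le> d}"
  proof (rule closure_minimal)
    show "\<Omega> \<subseteq> {y. \<nu> \<bullet> (y - x0) \<le> d}" using inO by auto
    have "{y. \<nu> \<bullet> (y - x0) \<le> d} = {y. \<nu> \<bullet> y \<le> d + \<nu> \<bullet> x0}" by (auto simp: inner_diff_right)
    then show "closed {y. \<nu> \<bullet> (y - x0) \<le> d}" by (simp add: closed_halfspace_le)
  qed
  moreover have "\<forall>y\<in>\<Omega>. \<nu> \<bullet> (y - x0) < d"
  proof
    fix y assume y: "y \<in> \<Omega>"
    define e where "e = dO y / 2"
    have ep: "e > 0" using d_pos[OF y] by (simp add: e_def)
    have "y + e *\<^sub>R \<nu> \<in> \<Omega>" using ball_sub[OF y, of "y + e *\<^sub>R \<nu>"] n1 ep by (simp add: dist_norm e_def)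
    then have "\<nu> \<bullet> (y + e *\<^sub>R \<nu> - x0) \<le> d" using inO by blast
    then show "\<nu> \<bullet> (y - x0) < d" using n1 ep
      by (simp add: inner_add_right inner_diff_right power2_norm_eq_inner[symmetric])
  qed
  ultimately show ?thesis using that n1 by (auto simp: d_def)
qed

lemma dist_hyper:
  assumes y: "y \<in> \<Omega>" and n1: "norm \<nu> = 1" and str: "\<forall>y\<in>\<Omega>. \<nu> \<bullet> (y - x0) < D"
  shows "dO y \<le> D - \<nu> \<bullet> (y - x0)"
proof -
  define \<tau> where "\<tau> = D - \<nu> \<bullet> (y - x0)"
  have tp: "\<tau> > 0" using str y by (simp add: \<tau>_def)
  have "\<nu> \<bullet> (y + \<tau> *\<^sub>R \<nu> - x0) = D" using n1
    by (simp add: \<tau>_def inner_add_right inner_diff_right power2_norm_eq_inner[symmetric])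
  then have "y + \<tau> *\<^sub>R \<nu> \<notin> \<Omega>" using str by force
  then have "\<not> dist y (y + \<tau> *\<^sub>R \<nu>) < dO y" using ball_sub[OF y] by blast
  then show ?thesis using n1 tp by (simp add: dist_norm \<tau>_def)
qed

lemma radial:
  assumes m: "m \<ge> 0" and s: "s > 0" and hyp: "\<forall>y\<in>\<Omega>. dO y \<le> s \<longrightarrow> \<bar>u y\<bar> \<le> m"
    and y: "y \<in> \<Omega>"
  shows "\<bar>u y\<bar> \<le> max m (dO y / s * m)"
proof (cases "dO y \<le> s")
  case True then show ?thesis using hyp y by auto
next
  case False
  define \<delta> where "\<delta> = dO y"
  have dlt: "s < \<delta>" using False by (simp add: \<delta>_def)
  obtain z where z: "z \<in> frontier \<Omega>" "dist y z = \<delta>" using nearest[OF y] \<delta>_def by metis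
  define t where "t = 1 - s / \<delta>"
  have t01: "0 \<le> t" "t < 1" using dlt s by (auto simp: t_def)
  define y' where "y' = (1 - t) *\<^sub>R y + t *\<^sub>R z"
  have "dist y y' = t * \<delta>"
  proof -
    have "y - y' = t *\<^sub>R (y - z)" by (simp add: y'_def algebra_simps)
    then show ?thesis using t01 z by (simp add: dist_norm)
  qed
  then have "dist y y' < dO y" using t01 dlt s by (simp add: \<delta>_def)
  then have y'O: "y' \<in> \<Omega>" using ball_sub[OF y] by blast
  have "dist y' z = (1 - t) * \<delta>"
  proof -
    have "y' - z = (1-t) *\<^sub>R (y - z)" by (simp add: y'_def algebra_simps)
    then show ?thesis using t01 z by (simp add: dist_norm)
  qed
  then have "dO y' \<le> s" using infdist_le[OF z(1), of y'] dlt s by (simp add: t_def)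
  then have uy': "\<bar>u y'\<bar> \<le> m" using hyp y'O by auto
  have "u y' \<le> (1-t) * u y + t * u z" unfolding y'_def
    using cvx_cl[of y z t] y z closure_eq t01 by auto
  then have "u y' \<le> (1-t) * u y" using bd0 z by simp
  moreover have "u y \<le> 0" "u y' \<le> 0" using u_nonpos y y'O by auto
  ultimately have "(1-t) * \<bar>u y\<bar> \<le> m" using uy' t01 by (smt (verit) mult_minus_right)
  then have "\<bar>u y\<bar> \<le> m / (1 - t)" using t01 by (simp add: field_simps)
  also have "m / (1-t) = \<delta> / s * m" using s dlt by (simp add: t_def field_simps)
  finally show ?thesis by (simp add: \<delta>_def)
qed

end

context MAset begin

lemma u_bounded: obtains U where "U \<ge> 0" "\<forall>y\<in>closure \<Omega>. \<bar>u y\<bar> \<le> U"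
proof -
  have "compact (u ` closure \<Omega>)"
    using compact_continuous_image[OF cont] bdd compact_closure by blast
  then obtain U where "\<forall>z\<in>u ` closure \<Omega>. norm z \<le> U"
    using compact_imp_bounded bounded_iff by metis
  then have "\<forall>y\<in>closure \<Omega>. \<bar>u y\<bar> \<le> max U 0" by (force simp: le_max_iff_disj)
  then show ?thesis using that[of "max U 0"] by auto
qed

lemma subdiff_compact:
  assumes K: "compact K" "K \<subseteq> \<Omega>"
  shows "compact (\<Union>x\<in>K. subdiff u \<Omega> x)"
proof -
  obtain \<epsilon> where ep: "\<epsilon> > 0" "(\<Union>x\<in>K. ball x \<epsilon>) \<subseteq> \<Omega>"
    using compact_subset_open_imp_ball_epsilon_subset[OF K(1) opn K(2)] by metis
  obtain U where U: "U \<ge> 0" "\<forall>y\<in>closure \<Omega>. \<bar>u y\<bar> \<le> U" using u_bounded by metis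
  define B where "B = 4 * U / \<epsilon>"
  have pb: "norm p \<le> B" if x: "x \<in> K" and p: "p \<in> subdiff u \<Omega> x" for x p
  proof (cases "p = 0")
    case True then show ?thesis using U ep by (simp add: B_def)
  next
    case False
    define y where "y = x + (\<epsilon> / 2 / norm p) *\<^sub>R p"
    have "dist x y = \<epsilon> / 2" using False ep by (simp add: y_def dist_norm)
    then have yO: "y \<in> \<Omega>" using ep x \<open>\<epsilon> > 0\<close> by (auto simp: subset_eq)
    have "u y \<ge> u x + inner p (y - x)" using p yO by (auto simp: subdiff_def)
    moreover have "inner p (y - x) = \<epsilon> / 2 * norm p"
      using False by (simp add: y_def power2_norm_eq_inner[symmetric] power2_eq_square)
    moreover have "\<bar>u y\<bar> \<le> U" "\<bar>u x\<bar> \<le> U" using U yO x K closure_subset by auto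
    ultimately have "\<epsilon> / 2 * norm p \<le> 2 * U" by linarith
    then show ?thesis using ep by (simp add: B_def field_simps)
  qed
  define F where "F y = (K \<times> UNIV) \<inter> (\<lambda>(x,p). u x + inner p (y - x) - u y) -` {..0}" for y
  have clF: "closed (F y)" for y
    unfolding F_def
  proof (rule continuous_closed_preimage)
    have cK: "continuous_on K u" using continuous_on_subset[OF cont] K closure_subset by blast
    show "continuous_on (K \<times> UNIV) (\<lambda>(x,p). u x + inner p (y - x) - u y)"
      unfolding case_prod_unfold
      by (intro continuous_intros continuous_on_compose2[OF cK]) auto
    show "closed (K \<times> (UNIV::'a set))" using K compact_imp_closed closed_Times by blast
  qed auto
  define G where "G = (K \<times> cball 0 B) \<inter> (\<Inter>y\<in>\<Omega>. F y)"
  have "compact G" unfolding G_def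
    by (intro compact_Int_closed compact_Times K(1) compact_cball closed_INT ballI clF) 
  then have "compact (snd ` G)" by (intro compact_continuous_image continuous_intros)
  moreover have "snd ` G = (\<Union>x\<in>K. subdiff u \<Omega> x)"
  proof
    show "snd ` G \<subseteq> (\<Union>x\<in>K. subdiff u \<Omega> x)"
    proof
      fix p assume "p \<in> snd ` G"
      then obtain x where xp: "(x,p) \<in> G" by force
      then have x: "x \<in> K" by (simp add: G_def)
      have "\<forall>y\<in>\<Omega>. u x + inner p (y - x) - u y \<le> 0"
      proof
        fix y assume y: "y \<in> \<Omega>"
        then have "(x,p) \<in> F y" using xp by (simp add: G_def)
        then show "u x + inner p (y - x) - u y \<le> 0" by (simp add: F_def)
      qed
      then have "p \<in> subdiff u \<Omega> x" by (auto simp: subdiff_def)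
      then show "p \<in> (\<Union>x\<in>K. subdiff u \<Omega> x)" using x by blast
    qed
    show "(\<Union>x\<in>K. subdiff u \<Omega> x) \<subseteq> snd ` G"
    proof
      fix p assume "p \<in> (\<Union>x\<in>K. subdiff u \<Omega> x)"
      then obtain x where x: "x \<in> K" "p \<in> subdiff u \<Omega> x" by auto
      then have "(x,p) \<in> G" using pb[OF x] by (auto simp: G_def F_def subdiff_def)
      then show "p \<in> snd ` G" by force
    qed
  qed
  ultimately show ?thesis by simp
qed

end

lemma cball_sub_cbox:
  fixes x0 :: "'a::euclidean_space"
  shows "cball x0 \<rho> \<subseteq> cbox (x0 - \<rho> *\<^sub>R \<Sum>Basis) (x0 + \<rho> *\<^sub>R \<Sum>Basis)"
proof
  fix y assume "y \<in> cball x0 \<rho>"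
  then have n: "norm (y - x0) \<le> \<rho>" by (simp add: dist_norm norm_minus_commute)
  show "y \<in> cbox (x0 - \<rho> *\<^sub>R \<Sum>Basis) (x0 + \<rho> *\<^sub>R \<Sum>Basis)"
    unfolding mem_box
  proof
    fix i :: 'a assume i: "i \<in> Basis"
    have "\<bar>(y - x0) \<bullet> i\<bar> \<le> \<rho>" using Basis_le_norm[OF i, of "y - x0"] n by simp
    then show "(x0 - \<rho> *\<^sub>R \<Sum>Basis) \<bullet> i \<le> y \<bullet> i \<and> y \<bullet> i \<le> (x0 + \<rho> *\<^sub>R \<Sum>Basis) \<bullet> i"
      using i by (auto simp: inner_diff_left inner_add_left abs_le_iff)
  qed
qed

lemma emeasure_cube:
  fixes x0 :: "'a::euclidean_space"
  assumes "\<rho> \<ge> 0"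
  shows "emeasure lebesgue (cbox (x0 - \<rho> *\<^sub>R \<Sum>Basis) (x0 + \<rho> *\<^sub>R \<Sum>Basis)) = ennreal ((2*\<rho>) ^ DIM('a))"
    and "emeasure lebesgue (box (x0 - \<rho> *\<^sub>R \<Sum>Basis) (x0 + \<rho> *\<^sub>R \<Sum>Basis)) = ennreal ((2*\<rho>) ^ DIM('a))"
  using assms by (simp_all add: emeasure_lborel_cbox_eq emeasure_lborel_box_eq inner_diff_left inner_add_left
      algebra_simps prod_constant)

lemma slab_measure:
  fixes x0 \<nu> :: "'a::euclidean_space"
  assumes n1: "norm \<nu> = 1" and d: "d > 0" and R: "R \<ge> d"
    and KA: "K \<subseteq> {y. -d \<le> \<nu> \<bullet> (y - x0) \<and> \<nu> \<bullet> (y - x0) < d} \<inter> cball x0 R"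
  shows "emeasure lebesgue K \<le> ennreal ((6*R) ^ DIM('a) * (2*d/R))"
proof -
  define A where "A = {y. -d \<le> \<nu> \<bullet> (y - x0) \<and> \<nu> \<bullet> (y - x0) < d} \<inter> cball x0 R"
  define N where "N = nat \<lfloor>R/d\<rfloor>"
  have Rd: "R/d \<ge> 1" using R d by simp
  have N1: "real N \<ge> 1" "real N \<le> R/d" "real N \<ge> R/(2*d)"
  proof -
    have "real N = of_int \<lfloor>R/d\<rfloor>" using Rd by (simp add: N_def)
    moreover have "of_int \<lfloor>R/d\<rfloor> > R/d - 1" by linarith
    moreover have "of_int \<lfloor>R/d\<rfloor> \<le> R/d" by linarith
    moreover have "of_int \<lfloor>R/d\<rfloor> \<ge> (1::real)" using Rd by (simp add: one_le_floor)
    moreover have "R/(2*d) = (R/d)/2" by simp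
    ultimately show "real N \<ge> 1" "real N \<le> R/d" "real N \<ge> R/(2*d)"
      by linarith+
  qed
  have Rpos: "R > 0" using R d by simp
  have Aborel: "A \<in> sets borel"
  proof -
    have "{y. -d \<le> \<nu> \<bullet> (y - x0) \<and> \<nu> \<bullet> (y - x0) < d} = {y. -d + \<nu> \<bullet> x0 \<le> \<nu> \<bullet> y} \<inter> {y. \<nu> \<bullet> y < d + \<nu> \<bullet> x0}"
      by (auto simp: inner_diff_right)
    moreover have "{y. -d + \<nu> \<bullet> x0 \<le> \<nu> \<bullet> y} \<in> sets borel" using closed_halfspace_ge borel_closed by blast
    moreover have "{y. \<nu> \<bullet> y < d + \<nu> \<bullet> x0} \<in> sets borel" using open_halfspace_lt borel_open by blast
    ultimately show ?thesis unfolding A_def by (simp add: sets.Int borel_closed)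
  qed
  then have Aleb: "A \<in> sets lebesgue" by simp
  define At where "At j = (\<lambda>y. 1 *\<^sub>R y + ((2*d*real j) *\<^sub>R \<nu>)) ` A" for j :: nat
  have Atm: "At j \<in> sets lebesgue" for j
  proof -
    have "At j = (\<lambda>y. (2*d*real j) *\<^sub>R \<nu> + y) ` A" by (simp add: At_def add.commute)
    then show ?thesis using lebesgue_sets_translation[OF Aleb] by simp
  qed
  have Ate: "emeasure lebesgue (At j) = emeasure lebesgue A" for j
    unfolding At_def using emeasure_lebesgue_affine[of 1 "(2*d*real j) *\<^sub>R \<nu>" A] by simp
  have inA: "-d \<le> \<nu> \<bullet> (y - x0) \<and> \<nu> \<bullet> (y - x0) < d \<and> dist x0 y \<le> R" if "y \<in> A" for y
    using that by (auto simp: A_def)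
  have disj: "disjoint_family_on At {..<N}"
  proof (unfold disjoint_family_on_def, intro ballI impI)
    fix i j assume ij: "i \<in> {..<N}" "j \<in> {..<N}" "i \<noteq> j"
    show "At i \<inter> At j = {}"
    proof (rule ccontr)
      assume "At i \<inter> At j \<noteq> {}"
      then obtain y1 y2 where y: "y1 \<in> A" "y2 \<in> A" "y1 + (2*d*real i) *\<^sub>R \<nu> = y2 + (2*d*real j) *\<^sub>R \<nu>"
        by (auto simp: At_def)
      have nn: "\<nu> \<bullet> \<nu> = 1" using n1 by (metis power2_norm_eq_inner one_power2)
      have "\<nu> \<bullet> (y1 + (2*d*real i) *\<^sub>R \<nu>) = \<nu> \<bullet> (y2 + (2*d*real j) *\<^sub>R \<nu>)" using y(3) by simp
      then have "\<nu> \<bullet> (y1 - x0) + 2*d*real i = \<nu> \<bullet> (y2 - x0) + 2*d*real j"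
        using nn by (simp add: inner_add_right inner_diff_right)
      moreover have "-d \<le> \<nu> \<bullet> (y1 - x0)" "\<nu> \<bullet> (y1 - x0) < d" "-d \<le> \<nu> \<bullet> (y2 - x0)" "\<nu> \<bullet> (y2 - x0) < d"
        using inA y by auto
      ultimately have "\<bar>2*d*real i - 2*d*real j\<bar> < 2*d" by linarith
      moreover have "\<bar>2*d*real i - 2*d*real j\<bar> = 2*d*\<bar>real i - real j\<bar>"
        using d by (simp add: abs_mult right_diff_distrib[symmetric])
      ultimately have "\<bar>real i - real j\<bar> < 1" using d by simp
      then show False using ij(3) by linarith
    qed
  qed
  have sub: "(\<Union>j<N. At j) \<subseteq> cbox (x0 - (3*R) *\<^sub>R \<Sum>Basis) (x0 + (3*R) *\<^sub>R \<Sum>Basis)"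
  proof -
    have "(\<Union>j<N. At j) \<subseteq> cball x0 (3*R)"
    proof
      fix y assume "y \<in> (\<Union>j<N. At j)"
      then obtain j y0 where j: "j < N" "y0 \<in> A" "y = y0 + (2*d*real j) *\<^sub>R \<nu>" by (auto simp: At_def)
      have "dist x0 y \<le> dist x0 y0 + norm ((2*d*real j) *\<^sub>R \<nu>)"
        using j(3) dist_triangle[of x0 y y0] by (simp add: dist_norm)
      also have "\<dots> \<le> R + 2*d*real N"
      proof -
        have h1: "dist x0 y0 \<le> R" using inA[OF j(2)] by blast
        have h2: "2*d*real j \<le> 2*d*real N" using d j(1) by (intro mult_left_mono) auto
        have h3: "norm ((2*d*real j) *\<^sub>R \<nu>) = 2*d*real j" using n1 d by simp
        show ?thesis using h1 h2 h3 by linarith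
      qed
      also have "\<dots> \<le> 3*R" using N1 d by (simp add: field_simps)
      finally show "y \<in> cball x0 (3*R)" by simp
    qed
    then show ?thesis using cball_sub_cbox by blast
  qed
  have "(\<Sum>j<N. emeasure lebesgue (At j)) = emeasure lebesgue (\<Union>j<N. At j)"
    by (rule sum_emeasure) (use Atm disj in auto)
  also have "\<dots> \<le> emeasure lebesgue (cbox (x0 - (3*R) *\<^sub>R \<Sum>Basis) (x0 + (3*R) *\<^sub>R \<Sum>Basis))"
    by (rule emeasure_mono[OF sub]) simp
  also have "\<dots> = ennreal ((2*(3*R)) ^ DIM('a))" by (rule emeasure_cube(1)) (use Rpos in simp)
  finally have le: "of_nat N * emeasure lebesgue A \<le> ennreal ((6*R) ^ DIM('a))" by (simp add: Ate)
  have Afin: "A \<in> lmeasurable"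
    by (rule bounded_set_imp_lmeasurable) (auto simp: A_def Aleb intro: bounded_subset[OF bounded_cball])
  then have eA: "emeasure lebesgue A = ennreal (measure lebesgue A)" by (simp add: emeasure_eq_measure2)
  have mA0: "measure lebesgue A \<ge> 0" by simp
  have "ennreal (real N * measure lebesgue A) \<le> ennreal ((6*R) ^ DIM('a))"
    using le by (simp add: eA ennreal_mult' ennreal_of_nat_eq_real_of_nat)
  then have "real N * measure lebesgue A \<le> (6*R) ^ DIM('a)"
    using Rpos by (simp add: ennreal_le_iff)
  then have "measure lebesgue A \<le> (6*R) ^ DIM('a) / real N" using N1 by (simp add: field_simps)
  also have "\<dots> \<le> (6*R) ^ DIM('a) * (2*d/R)"
  proof -
    have "1 / real N \<le> 2*d/R" using N1 d Rpos by (simp add: field_simps)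
    then show ?thesis using Rpos
      by (metis divide_inverse inverse_eq_divide mult_left_mono zero_le_power mult_nonneg_nonneg zero_le_numeral less_imp_le)
  qed
  finally have "measure lebesgue A \<le> (6*R) ^ DIM('a) * (2*d/R)" .
  then have "emeasure lebesgue A \<le> ennreal ((6*R) ^ DIM('a) * (2*d/R))"
    using eA by (simp add: ennreal_leI del: power_mult_distrib)
  moreover have "emeasure lebesgue K \<le> emeasure lebesgue A"
    by (rule emeasure_mono) (use KA Aleb in \<open>auto simp: A_def\<close>)
  ultimately show ?thesis by order
qed

lemma box_near:
  fixes c :: "'a::euclidean_space" and r :: real
  assumes "p \<in> cbox (c - r *\<^sub>R \<Sum>Basis) (c + r *\<^sub>R \<Sum>Basis)"
  shows "norm (p - c) \<le> DIM('a) * r"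
proof -
  have "\<bar>(p - c) \<bullet> i\<bar> \<le> r" if i: "i \<in> Basis" for i
    using assms i unfolding mem_box by (auto simp: inner_diff_left inner_add_left abs_le_iff)
  then have "(\<Sum>i\<in>Basis. \<bar>(p - c) \<bullet> i\<bar>) \<le> (\<Sum>i\<in>(Basis::'a set). r)" by (intro sum_mono) auto
  then show ?thesis using norm_le_l1[of "p - c"] by simp
qed

lemma box_disj:
  fixes c c' :: "'a::euclidean_space" and r :: real
  assumes "norm (c - c') \<ge> 2 * DIM('a) * r"
  shows "box (c - r *\<^sub>R \<Sum>Basis) (c + r *\<^sub>R \<Sum>Basis) \<inter> box (c' - r *\<^sub>R \<Sum>Basis) (c' + r *\<^sub>R \<Sum>Basis) = {}"
proof (rule ccontr)
  assume "\<not> ?thesis"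
  then obtain p where p: "p \<in> box (c - r *\<^sub>R \<Sum>Basis) (c + r *\<^sub>R \<Sum>Basis)" "p \<in> box (c' - r *\<^sub>R \<Sum>Basis) (c' + r *\<^sub>R \<Sum>Basis)"
    by blast
  have "\<bar>(c - c') \<bullet> i\<bar> < 2 * r" if i: "i \<in> Basis" for i
  proof -
    have "c \<bullet> i - r < p \<bullet> i" "p \<bullet> i < c \<bullet> i + r" "c' \<bullet> i - r < p \<bullet> i" "p \<bullet> i < c' \<bullet> i + r"
      using p i unfolding mem_box by (auto simp: inner_diff_left inner_add_left)
    then show ?thesis by (simp add: inner_diff_left abs_less_iff)
  qed
  then have "(\<Sum>i\<in>Basis. \<bar>(c - c') \<bullet> i\<bar>) < (\<Sum>i\<in>(Basis::'a set). 2 * r)" 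
    by (intro sum_strict_mono) auto
  then have "norm (c - c') < DIM('a) * (2 * r)" using norm_le_l1[of "c - c'"] by simp
  then show False using assms by (simp add: algebra_simps)
qed

lemma final_ineq:
  fixes d Dm M Cp :: real and N n :: nat
  assumes n: "n \<ge> 2" and d: "d > 0" and Dm: "Dm > 0" and M: "M > 0" and N: "real N \<ge> Dm/(2*d)"
    and Cp: "Cp > 0"
    and CpK: "Cp ^ n > 2 * (2 * real n)^n * M * 2^(n-1) * 6^n * Dm^(2*n-2)"
  shows "M * (2*d)^(n-2) * ((6*Dm)^n * (2*d/Dm)) < real N * (2 * (Cp*d/(4*Dm) / real n))^n"
proof -
  obtain j where j: "n = Suc (Suc j)" using n by (metis add_2_eq_Suc le_Suc_ex)
  have npos: "real n > 0" using n by simp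
  have e1: "M * (2*d)^(n-2) * ((6*Dm)^n * (2*d/Dm)) = (M * 2^(Suc j) * 6^n * Dm^(Suc j)) * d^(Suc j)"
    using Dm d unfolding j by (simp add: power_mult_distrib field_simps)
  have e2: "(Dm/(2*d)) * (2*(Cp*d/(4*Dm)/real n))^n = (Cp^n / (2*(2*real n)^n * Dm^(Suc j))) * d^(Suc j)"
  proof -
    have "2*(Cp*d/(4*Dm)/real n) = Cp*d/(2*real n*Dm)" using npos Dm by (simp add: field_simps)
    then have "(2*(Cp*d/(4*Dm)/real n))^n = Cp^n * d^n / ((2*real n)^n * Dm^n)"
      by (simp add: power_divide power_mult_distrib)
    moreover have dn: "d^n = d * d^(Suc j)" "Dm^n = Dm * Dm^(Suc j)" using j by simp_all
    ultimately show ?thesis using Dm d npos by (simp add: field_simps)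
  qed
  have c: "M * 2^(Suc j) * 6^n * Dm^(Suc j) < Cp^n / (2*(2*real n)^n * Dm^(Suc j))"
  proof -
    have pos: "2*(2*real n)^n * Dm^(Suc j) > 0" using npos Dm by simp
    have k1: "n - 1 = Suc j" "2*n-2 = Suc j + Suc j" using j by simp_all
    have "Cp ^ n > 2 * (2 * real n)^n * M * 2^(Suc j) * 6^n * (Dm^(Suc j) * Dm^(Suc j))"
      using CpK unfolding k1 power_add by simp
    then have "(M * 2^(Suc j) * 6^n * Dm^(Suc j)) * (2*(2*real n)^n * Dm^(Suc j)) < Cp^n"
      by (simp add: algebra_simps)
    then show ?thesis using pos by (simp add: field_simps)
  qed
  have "M * (2*d)^(n-2) * ((6*Dm)^n * (2*d/Dm)) < (Cp^n / (2*(2*real n)^n * Dm^(Suc j))) * d^(Suc j)"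
    unfolding e1 using c d by (intro mult_strict_right_mono) auto
  also have "\<dots> = (Dm/(2*d)) * (2*(Cp*d/(4*Dm)/real n))^n" using e2 by simp
  also have "\<dots> \<le> real N * (2 * (Cp*d/(4*Dm) / real n))^n"
    using N Cp d Dm npos by (intro mult_right_mono) auto
  finally show ?thesis .
qed

locale MAfull = MAset \<Omega> u for \<Omega> :: "'a::euclidean_space set" and u +
  fixes M Dm Cp :: real
  assumes Mpos: "M > 0" and dim2: "DIM('a) \<ge> 2" and Dmpos: "Dm > 0"
    and Dmb: "\<forall>x\<in>closure \<Omega>. \<forall>y\<in>closure \<Omega>. dist x y \<le> Dm"
    and MA: "aleksandrov_det_le u \<Omega> (\<lambda>x. M * dO x ^ (DIM('a) - 2))"
    and Cp1: "Cp \<ge> 1"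
    and CpK: "Cp ^ DIM('a) > 2 * (2 * real DIM('a))^DIM('a) * M * 2^(DIM('a)-1) * 6^DIM('a) * Dm^(2*DIM('a)-2)"
begin

lemma key:
  assumes x0: "x0 \<in> \<Omega>" and m0: "m \<ge> 0" and hyp: "\<forall>y\<in>\<Omega>. dO y \<le> 2 * dO x0 \<longrightarrow> \<bar>u y\<bar> \<le> m"
  shows "\<bar>u x0\<bar> \<le> m/2 + Cp * dO x0"
proof (rule ccontr)
  assume nt: "\<not> ?thesis"
  define n where "n = DIM('a)"
  have n2: "n \<ge> 2" using dim2 by (simp add: n_def)
  define d where "d = dO x0"
  have dpos: "d > 0" using d_pos[OF x0] by (simp add: d_def)
  define h where "h = - u x0"
  have hu: "\<bar>u x0\<bar> = h" using u_nonpos[OF x0] by (simp add: h_def)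
  have hbig: "h > m/2 + Cp * d" using nt hu by (simp add: d_def)
  obtain \<nu> where n1: "norm \<nu> = 1" and nle: "\<forall>y\<in>closure \<Omega>. \<nu> \<bullet> (y - x0) \<le> d"
      and nlt: "\<forall>y\<in>\<Omega>. \<nu> \<bullet> (y - x0) < d"
    using normal[OF x0] by (metis d_def)
  have nn: "\<nu> \<bullet> \<nu> = 1" using n1 by (metis power2_norm_eq_inner one_power2)
  have x0c: "x0 \<in> closure \<Omega>" using x0 closure_subset by blast
  have dDm: "d \<le> Dm"
  proof -
    obtain z where z: "z \<in> frontier \<Omega>" "dist x0 z = dO x0" using nearest[OF x0] by metis
    then have "z \<in> closure \<Omega>" using closure_eq by auto
    then have "dist x0 z \<le> Dm" using Dmb x0c by blast
    then show ?thesis using z by (simp add: d_def)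
  qed
  define a1 where "a1 = h/d - Cp"
  define a2 where "a2 = h/d - Cp/2"
  define b where "b = Cp*d/(4*Dm)"
  define r where "r = b / real n"
  define N where "N = nat \<lfloor>Dm/d\<rfloor>"
  define cj where "cj j = a1 + b + 2*b*real j" for j :: nat
  define ctr where "ctr j = cj j *\<^sub>R \<nu>" for j :: nat
  define Tb where "Tb j = cbox (ctr j - r *\<^sub>R \<Sum>Basis) (ctr j + r *\<^sub>R \<Sum>Basis)" for j :: nat
  define Sb where "Sb j = box (ctr j - r *\<^sub>R \<Sum>Basis) (ctr j + r *\<^sub>R \<Sum>Basis)" for j :: nat
  define T where "T = (\<Union>j<N. Tb j)"
  define S where "S = (\<Union>j<N. Sb j)"
  have bpos: "b > 0" using Cp1 dpos Dmpos by (simp add: b_def)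
  have rpos: "r > 0" using bpos n2 by (simp add: r_def)
  have bDm: "b * Dm = Cp * d / 4" using Dmpos by (simp add: b_def)
  have a1m: "a1 > m / (2*d)" using hbig dpos by (simp add: a1_def field_simps)
  have a1pos: "a1 > 0" using a1m m0 dpos by (smt (verit) divide_nonneg_pos)
  have a2d: "a2 * d = h - Cp * d / 2" using dpos by (simp add: a2_def field_simps)
  have Rd: "Dm/d \<ge> 1" using dDm dpos by simp
  have N1: "real N \<ge> 1" "real N \<le> Dm/d" "real N \<ge> Dm/(2*d)"
  proof -
    have "real N = of_int \<lfloor>Dm/d\<rfloor>" using Rd by (simp add: N_def)
    moreover have "of_int \<lfloor>Dm/d\<rfloor> > Dm/d - 1" by linarith
    moreover have "of_int \<lfloor>Dm/d\<rfloor> \<le> Dm/d" by linarith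
    moreover have "of_int \<lfloor>Dm/d\<rfloor> \<ge> (1::real)" using Rd by (simp add: one_le_floor)
    moreover have "Dm/(2*d) = (Dm/d)/2" by simp
    ultimately show "real N \<ge> 1" "real N \<le> Dm/d" "real N \<ge> Dm/(2*d)"
      by linarith+
  qed
  have TP: "a1 \<le> p \<bullet> \<nu> \<and> p \<bullet> \<nu> \<le> a2 \<and> norm (p - (p \<bullet> \<nu>) *\<^sub>R \<nu>) \<le> b" if p: "p \<in> T" for p
  proof -
    obtain j where j: "j < N" "p \<in> Tb j" using p by (auto simp: T_def)
    define w where "w = p - ctr j"
    have nw: "norm w \<le> b" using box_near[of p "ctr j" r] j(2) rpos n2
      by (simp add: Tb_def w_def r_def n_def)
    have pw: "p \<bullet> \<nu> = w \<bullet> \<nu> + cj j" by (simp add: w_def ctr_def inner_diff_left nn)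
    have "\<bar>w \<bullet> \<nu>\<bar> \<le> norm w * norm \<nu>" by (rule Cauchy_Schwarz_ineq2)
    then have wn: "\<bar>w \<bullet> \<nu>\<bar> \<le> b" using nw n1 by simp
    have "2*b*real N \<le> 2*b*(Dm/d)" using N1 bpos by (intro mult_left_mono) auto
    also have "\<dots> = Cp/2" using dpos Dmpos by (simp add: b_def field_simps)
    finally have bN: "2*b*real N \<le> Cp/2" .
    have "2*b*real (Suc j) \<le> 2*b*real N" using j(1) bpos by simp
    then have up: "cj j + b \<le> a2" using bN by (simp add: cj_def a1_def a2_def algebra_simps)
    have lo: "a1 \<le> cj j - b" using bpos by (simp add: cj_def)
    have proj: "p - (p \<bullet> \<nu>) *\<^sub>R \<nu> = w - (w \<bullet> \<nu>) *\<^sub>R \<nu>"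
      by (simp add: w_def ctr_def inner_diff_left nn algebra_simps)
    have "(norm (w - (w \<bullet> \<nu>) *\<^sub>R \<nu>))^2 = (w - (w \<bullet> \<nu>) *\<^sub>R \<nu>) \<bullet> (w - (w \<bullet> \<nu>) *\<^sub>R \<nu>)"
      by (rule power2_norm_eq_inner)
    also have "\<dots> = w \<bullet> w - (w \<bullet> \<nu>)^2"
      by (simp add: inner_diff_left inner_diff_right nn inner_commute power2_eq_square)
    also have "w \<bullet> w = (norm w)^2" by (simp add: power2_norm_eq_inner)
    finally have "(norm (w - (w \<bullet> \<nu>) *\<^sub>R \<nu>))^2 = (norm w)^2 - (w \<bullet> \<nu>)^2" .
    then have "(norm (w - (w \<bullet> \<nu>) *\<^sub>R \<nu>))^2 \<le> (norm w)^2" by simp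
    then have "norm (w - (w \<bullet> \<nu>) *\<^sub>R \<nu>) \<le> norm w" by (rule power2_le_imp_le) simp
    then show ?thesis using proj nw up lo pw wn by (auto simp: abs_le_iff)
  qed
  have ineq1: "p \<bullet> (y - x0) \<le> (p \<bullet> \<nu>) * (\<nu> \<bullet> (y - x0)) + Cp * d / 4"
    if p: "p \<in> T" and y: "y \<in> closure \<Omega>" for p y
  proof -
    define q where "q = p - (p \<bullet> \<nu>) *\<^sub>R \<nu>"
    have e: "p \<bullet> (y - x0) = (p \<bullet> \<nu>) * (\<nu> \<bullet> (y - x0)) + q \<bullet> (y - x0)"
      by (simp add: q_def inner_diff_left)
    have "q \<bullet> (y - x0) \<le> norm q * norm (y - x0)" by (rule norm_cauchy_schwarz)
    also have "\<dots> \<le> b * Dm"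
    proof (rule mult_mono)
      show "norm q \<le> b" using TP[OF p] by (simp add: q_def)
      show "norm (y - x0) \<le> Dm" using Dmb y x0c by (metis dist_norm)
    qed (use bpos in auto)
    finally show ?thesis using e bDm by simp
  qed
  have fr: "p \<bullet> (y - x0) \<le> h - Cp * d / 4" if p: "p \<in> T" and y: "y \<in> closure \<Omega>" for p y
  proof -
    have "(p \<bullet> \<nu>) * (\<nu> \<bullet> (y - x0)) \<le> (p \<bullet> \<nu>) * d"
      using TP[OF p] a1pos nle y by (intro mult_left_mono) auto
    also have "\<dots> \<le> a2 * d" using TP[OF p] dpos by (intro mult_right_mono) auto
    finally show ?thesis using ineq1[OF p y] a2d by simp
  qed
  define K where "K = {y \<in> closure \<Omega>. \<exists>p\<in>T. u y - p \<bullet> (y - x0) \<le> -h}"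
  have KO: "K \<subseteq> \<Omega>"
  proof
    fix y assume y: "y \<in> K"
    then obtain p where p: "p \<in> T" "u y - p \<bullet> (y - x0) \<le> -h" and yc: "y \<in> closure \<Omega>"
      by (auto simp: K_def)
    show "y \<in> \<Omega>"
    proof (rule ccontr)
      assume "y \<notin> \<Omega>"
      then have yf: "y \<in> frontier \<Omega>" using yc closure_eq by auto
      then have "u y = 0" using bd0 by simp
      moreover have "Cp * d > 0" using Cp1 dpos by simp
      ultimately show False using fr[OF p(1) yc] p(2) by linarith
    qed
  qed
  have Kc: "compact K"
  proof -
    have Tc: "compact T" unfolding T_def Tb_def by (intro compact_UN) auto
    have Oc: "compact (closure \<Omega>)" using bdd compact_closure by blast
    define G0 where "G0 = (closure \<Omega> \<times> T) \<inter> (\<lambda>(y,p). u y - p \<bullet> (y - x0)) -` {..-h}"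
    have "closed G0" unfolding G0_def
    proof (rule continuous_closed_preimage)
      show "continuous_on (closure \<Omega> \<times> T) (\<lambda>(y,p). u y - p \<bullet> (y - x0))"
        unfolding case_prod_unfold
        by (intro continuous_intros continuous_on_compose2[OF cont]) auto
      show "closed (closure \<Omega> \<times> T)" using Tc Oc compact_imp_closed closed_Times by blast
    qed auto
    then have "compact ((closure \<Omega> \<times> T) \<inter> G0)" using compact_Times[OF Oc Tc] by blast
    moreover have "(closure \<Omega> \<times> T) \<inter> G0 = G0" by (auto simp: G0_def)
    ultimately have "compact G0" by simp
    then have "compact (fst ` G0)" by (intro compact_continuous_image continuous_intros)
    moreover have "fst ` G0 = K" by (force simp: G0_def K_def)
    ultimately show ?thesis by simp
  qed
  have TK: "T \<subseteq> (\<Union>x\<in>K. subdiff u \<Omega> x)"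
  proof
    fix p assume p: "p \<in> T"
    have Oc: "compact (closure \<Omega>)" using bdd compact_closure by blast
    have "continuous_on (closure \<Omega>) (\<lambda>y. p \<bullet> (y - x0))" by (intro continuous_intros)
    then have "continuous_on (closure \<Omega>) (\<lambda>y. u y - p \<bullet> (y - x0))"
      using cont by (intro continuous_on_diff) auto
    moreover have ne': "closure \<Omega> \<noteq> {}" using x0c by (metis empty_iff)
    ultimately obtain yp where yp: "yp \<in> closure \<Omega>" "\<forall>y\<in>closure \<Omega>. u yp - p \<bullet> (yp - x0) \<le> u y - p \<bullet> (y - x0)"
      using continuous_attains_inf[OF Oc ne', of "\<lambda>y. u y - p \<bullet> (y - x0)"] by blast
    have "u yp - p \<bullet> (yp - x0) \<le> u x0 - p \<bullet> (x0 - x0)" using yp(2) x0c by blast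
    then have "u yp - p \<bullet> (yp - x0) \<le> -h" by (simp add: h_def)
    then have ypK: "yp \<in> K" using yp(1) p by (auto simp: K_def)
    have "p \<in> subdiff u \<Omega> yp"
      unfolding subdiff_def
    proof (intro CollectI ballI)
      fix y assume "y \<in> \<Omega>"
      then have "u yp - p \<bullet> (yp - x0) \<le> u y - p \<bullet> (y - x0)" using yp(2) closure_subset by blast
      then show "u y \<ge> u yp + p \<bullet> (y - yp)" by (simp add: inner_diff_right)
    qed
    then show "p \<in> (\<Union>x\<in>K. subdiff u \<Omega> x)" using ypK by blast
  qed
  have Kslab: "K \<subseteq> {y. -d \<le> \<nu> \<bullet> (y - x0) \<and> \<nu> \<bullet> (y - x0) < d} \<inter> cball x0 Dm"
  proof
    fix y assume yK: "y \<in> K"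
    then have yO: "y \<in> \<Omega>" using KO by blast
    then have yc: "y \<in> closure \<Omega>" using closure_subset by blast
    obtain p where p: "p \<in> T" "u y - p \<bullet> (y - x0) \<le> -h" using yK by (auto simp: K_def)
    have up: "\<nu> \<bullet> (y - x0) < d" using nlt yO by blast
    have dist: "dist x0 y \<le> Dm" using Dmb x0c yc by blast
    have lo: "-d \<le> \<nu> \<bullet> (y - x0)"
    proof (rule ccontr)
      assume nlo: "\<not> ?thesis"
      define \<tau> where "\<tau> = d - \<nu> \<bullet> (y - x0)"
      have t2: "\<tau> > 2*d" using nlo by (simp add: \<tau>_def)
      have dOy: "dO y \<le> \<tau>" using dist_hyper[OF yO n1 nlt] by (simp add: \<tau>_def)
      have rad: "\<bar>u y\<bar> \<le> max m (dO y / (2*d) * m)"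
        using radial[OF m0 _ _ yO, of "2*d"] dpos hyp by (simp add: d_def)
      have "dO y / (2*d) * m \<le> \<tau> / (2*d) * m"
        using dOy dpos m0 by (intro mult_right_mono divide_right_mono) auto
      moreover have "m \<le> \<tau> / (2*d) * m"
      proof -
        have "1 \<le> \<tau> / (2*d)" using t2 dpos by simp
        from mult_right_mono[OF this m0] show ?thesis by simp
      qed
      ultimately have ub: "\<bar>u y\<bar> \<le> \<tau> / (2*d) * m" using rad by simp
      have pnu: "a1 \<le> p \<bullet> \<nu>" "p \<bullet> \<nu> \<le> a2" using TP[OF p(1)] by auto
      have "(p \<bullet> \<nu>) * (\<nu> \<bullet> (y - x0)) = (p \<bullet> \<nu>) * d - (p \<bullet> \<nu>) * \<tau>"
        by (simp add: \<tau>_def algebra_simps)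
      moreover have "(p \<bullet> \<nu>) * d \<le> a2 * d" using pnu dpos by (intro mult_right_mono) auto
      ultimately have "p \<bullet> (y - x0) \<le> a2 * d - (p \<bullet> \<nu>) * \<tau> + Cp * d / 4"
        using ineq1[OF p(1) yc] by simp
      then have "- u y \<ge> Cp * d / 4 + (p \<bullet> \<nu>) * \<tau>" using p(2) a2d by simp
      moreover have "a1 * \<tau> \<le> (p \<bullet> \<nu>) * \<tau>" using pnu t2 dpos by (intro mult_right_mono) auto
      moreover have "m / (2*d) * \<tau> < a1 * \<tau>" using a1m t2 dpos by (intro mult_strict_right_mono) auto
      moreover have "m / (2*d) * \<tau> = \<tau> / (2*d) * m" by simp
      moreover have "Cp * d / 4 > 0" using Cp1 dpos by simp
      ultimately have "- u y > \<tau> / (2*d) * m" by linarith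
      then show False using ub by simp
    qed
    show "y \<in> {y. -d \<le> \<nu> \<bullet> (y - x0) \<and> \<nu> \<bullet> (y - x0) < d} \<inter> cball x0 Dm"
      using lo up dist by simp
  qed
  have Kd: "dO y \<le> 2*d" if "y \<in> K" for y
  proof -
    have yO: "y \<in> \<Omega>" using that KO by blast
    have "dO y \<le> d - \<nu> \<bullet> (y - x0)" using dist_hyper[OF yO n1 nlt] by simp
    moreover have "-d \<le> \<nu> \<bullet> (y - x0)" using Kslab that by blast
    ultimately show ?thesis by simp
  qed
  have mS: "emeasure lebesgue S = ennreal (real N * (2*r)^n)"
  proof -
    have disj: "disjoint_family_on Sb {..<N}"
    proof (unfold disjoint_family_on_def, intro ballI impI)
      fix i j assume ij: "i \<in> {..<N}" "j \<in> {..<N}" "i \<noteq> j"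
      have "norm (ctr i - ctr j) = \<bar>cj i - cj j\<bar>"
        using n1 by (simp add: ctr_def scaleR_diff_left[symmetric])
      also have "\<dots> = 2*b*\<bar>real i - real j\<bar>" using bpos
        by (simp add: cj_def abs_mult right_diff_distrib[symmetric])
      also have "\<dots> \<ge> 2*b" using ij(3) bpos by (simp add: of_nat_diff)
      finally have "norm (ctr i - ctr j) \<ge> 2 * DIM('a) * r" using n2 by (simp add: r_def n_def)
      then show "Sb i \<inter> Sb j = {}" unfolding Sb_def by (rule box_disj)
    qed
    have "emeasure lebesgue S = (\<Sum>j<N. emeasure lebesgue (Sb j))"
      unfolding S_def
    proof (rule sum_emeasure[symmetric])
      show "Sb ` {..<N} \<subseteq> sets lebesgue" by (auto simp: Sb_def)
    qed (use disj in auto)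
    also have "\<dots> = (\<Sum>j<N. ennreal ((2*r)^n))"
    proof (rule sum.cong[OF refl])
      fix j show "emeasure lebesgue (Sb j) = ennreal ((2*r)^n)"
        unfolding Sb_def n_def by (rule emeasure_cube(2)) (use rpos in simp)
    qed
    also have "\<dots> = ennreal (\<Sum>j<N. (2*r)^n)" using rpos by (subst sum_ennreal) auto
    also have "\<dots> = ennreal (real N * (2*r)^n)" by simp
    finally show ?thesis .
  qed
  have chain: "emeasure lebesgue S \<le> ennreal (M * (2*d)^(n-2) * ((6*Dm)^n * (2*d/Dm)))"
  proof -
    define W where "W = (\<Union>x\<in>K. subdiff u \<Omega> x)"
    have Wc: "compact W" unfolding W_def by (rule subdiff_compact[OF Kc KO])
    then have Wm: "W \<in> sets lebesgue" by (simp add: borel_compact)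
    have "S \<subseteq> T" unfolding S_def T_def Sb_def Tb_def using box_subset_cbox by blast
    then have "emeasure lebesgue S \<le> emeasure lebesgue W"
      using TK Wm by (intro emeasure_mono) (auto simp: W_def)
    also have "\<dots> = MA_measure u \<Omega> K" by (simp add: MA_measure_def W_def)
    also have "\<dots> \<le> (\<integral>\<^sup>+ x\<in>K. ennreal (M * dO x ^ (DIM('a) - 2)) \<partial>lebesgue)"
      using MA KO Kc by (simp add: aleksandrov_det_le_def borel_compact)
    also have "\<dots> \<le> (\<integral>\<^sup>+ x. ennreal (M * (2*d)^(n-2)) * indicator K x \<partial>lebesgue)"
    proof (rule nn_integral_mono)
      fix x
      show "ennreal (M * dO x ^ (DIM('a) - 2)) * indicator K x \<le> ennreal (M * (2*d)^(n-2)) * indicator K x"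
      proof (cases "x \<in> K")
        case True
        have "dO x ^ (n-2) \<le> (2*d)^(n-2)" using Kd[OF True] infdist_nonneg by (intro power_mono) auto
        then have "M * dO x ^ (n-2) \<le> M * (2*d)^(n-2)" using Mpos by simp
        then show ?thesis using True by (simp add: n_def ennreal_leI)
      qed simp
    qed
    also have "\<dots> = ennreal (M * (2*d)^(n-2)) * emeasure lebesgue K"
      using Kc by (simp add: nn_integral_cmult_indicator borel_compact)
    also have "\<dots> \<le> ennreal (M * (2*d)^(n-2)) * ennreal ((6*Dm) ^ n * (2*d/Dm))"
      using slab_measure[OF n1 dpos dDm Kslab] by (intro mult_left_mono) (auto simp: n_def)
    also have "\<dots> = ennreal (M * (2*d)^(n-2) * ((6*Dm)^n * (2*d/Dm)))"
      by (rule ennreal_mult[symmetric]) (use Mpos dpos Dmpos in auto)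
    finally show ?thesis .
  qed
  have fin: "M * (2*d)^(n-2) * ((6*Dm)^n * (2*d/Dm)) < real N * (2*r)^n"
    unfolding r_def b_def
    by (rule final_ineq[OF n2 dpos Dmpos Mpos N1(3)]) (use Cp1 CpK in \<open>auto simp: n_def\<close>)
  have c2pos: "0 \<le> M * (2*d)^(n-2) * ((6*Dm)^n * (2*d/Dm))" using Mpos dpos Dmpos by simp
  have "ennreal (real N * (2*r)^n) \<le> ennreal (M * (2*d)^(n-2) * ((6*Dm)^n * (2*d/Dm)))"
    using chain mS by simp
  then have "real N * (2*r)^n \<le> M * (2*d)^(n-2) * ((6*Dm)^n * (2*d/Dm))"
    using ennreal_le_iff[OF c2pos] by blast
  then show False using fin by linarith
qed

end

context MAfull begin

lemma dO_le: assumes x: "x \<in> \<Omega>" shows "dO x \<le> Dm"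
proof -
  obtain z where z: "z \<in> frontier \<Omega>" "dist x z = dO x" using nearest[OF x] by metis
  then have "z \<in> closure \<Omega>" using closure_eq by auto
  moreover have "x \<in> closure \<Omega>" using x closure_subset by blast
  ultimately have "dist x z \<le> Dm" using Dmb by blast
  then show ?thesis using z by simp
qed

lemma global: "\<forall>y\<in>\<Omega>. \<bar>u y\<bar> \<le> 2 * Cp * Dm"
proof -
  have Oc: "compact (closure \<Omega>)" using bdd compact_closure by blast
  have ne': "closure \<Omega> \<noteq> {}" using ne closure_subset by blast
  have "continuous_on (closure \<Omega>) (\<lambda>y. \<bar>u y\<bar>)" using cont by (intro continuous_intros)
  then obtain xm where xm: "xm \<in> closure \<Omega>" "\<forall>y\<in>closure \<Omega>. \<bar>u y\<bar> \<le> \<bar>u xm\<bar>"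
    using continuous_attains_sup[OF Oc ne', of "\<lambda>y. \<bar>u y\<bar>"] by blast
  have "\<bar>u xm\<bar> \<le> 2 * Cp * Dm"
  proof (cases "xm \<in> \<Omega>")
    case False
    then have "xm \<in> frontier \<Omega>" using xm closure_eq by auto
    then show ?thesis using bd0 Cp1 Dmpos by simp
  next
    case True
    have "\<bar>u xm\<bar> \<le> \<bar>u xm\<bar>/2 + Cp * dO xm"
    proof (rule key[OF True])
      show "\<forall>y\<in>\<Omega>. dO y \<le> 2 * dO xm \<longrightarrow> \<bar>u y\<bar> \<le> \<bar>u xm\<bar>"
        using xm(2) closure_subset by blast
    qed simp
    moreover have "Cp * dO xm \<le> Cp * Dm" using dO_le[OF True] Cp1 by simp
    ultimately show ?thesis by simp
  qed
  then show ?thesis using xm(2) closure_subset by (meson order_trans subsetD)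
qed

lemma iter: "\<forall>y\<in>\<Omega>. \<forall>s. s \<ge> Dm / 2^k \<and> dO y \<le> s \<longrightarrow> \<bar>u y\<bar> \<le> s * (2*Cp + real k * Cp)"
proof (induction k)
  case 0
  show ?case
  proof (intro ballI allI impI)
    fix y s assume y: "y \<in> \<Omega>" and s: "s \<ge> Dm / 2^0 \<and> dO y \<le> s"
    have "\<bar>u y\<bar> \<le> 2 * Cp * Dm" using global y by blast
    also have "\<dots> \<le> 2 * Cp * s" using s Cp1 by simp
    finally show "\<bar>u y\<bar> \<le> s * (2*Cp + real 0 * Cp)" by (simp add: algebra_simps)
  qed
next
  case (Suc k)
  define c where "c = 2*Cp + real k * Cp"
  have cpos: "c \<ge> 0" using Cp1 by (simp add: c_def)
  have IH: "\<And>y s. y \<in> \<Omega> \<Longrightarrow> s \<ge> Dm / 2^k \<Longrightarrow> dO y \<le> s \<Longrightarrow> \<bar>u y\<bar> \<le> s * c"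
    using Suc.IH by (auto simp: c_def)
  show ?case
  proof (intro ballI allI impI)
    fix y s assume y: "y \<in> \<Omega>" and s: "s \<ge> Dm / 2^Suc k \<and> dO y \<le> s"
    define \<delta> where "\<delta> = dO y"
    have dpos: "\<delta> > 0" using d_pos[OF y] by (simp add: \<delta>_def)
    have goal: "\<bar>u y\<bar> \<le> s * (c + Cp)"
    proof (cases "s \<ge> Dm / 2^k")
      case True
      have "\<bar>u y\<bar> \<le> s * c" using IH[OF y True] s by simp
      also have "\<dots> \<le> s * (c + Cp)" using s dpos Cp1 \<delta>_def by (intro mult_left_mono) auto
      finally show ?thesis .
    next
      case False
      show ?thesis
      proof (cases "2 * \<delta> \<ge> Dm / 2^k")
        case True
        have "\<bar>u y\<bar> \<le> (2*\<delta>*c)/2 + Cp * dO y"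
        proof (rule key[OF y])
          show "0 \<le> 2*\<delta>*c" using cpos dpos by simp
          show "\<forall>y'\<in>\<Omega>. dO y' \<le> 2 * dO y \<longrightarrow> \<bar>u y'\<bar> \<le> 2*\<delta>*c"
          proof (intro ballI impI)
            fix y' assume y': "y' \<in> \<Omega>" "dO y' \<le> 2 * dO y"
            have "Dm / 2^k \<le> 2*\<delta>" using True by simp
            moreover have "dO y' \<le> 2*\<delta>" using y'(2) by (simp add: \<delta>_def)
            ultimately show "\<bar>u y'\<bar> \<le> 2*\<delta>*c" using IH[OF y'(1), of "2*\<delta>"] by simp
          qed
        qed
        also have "\<dots> = \<delta> * (c + Cp)" by (simp add: \<delta>_def algebra_simps)
        also have "\<dots> \<le> s * (c + Cp)" using s cpos Cp1 by (intro mult_right_mono) (auto simp: \<delta>_def)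
        finally show ?thesis .
      next
        case False
        have "\<bar>u y\<bar> \<le> (Dm / 2^k * c)/2 + Cp * dO y"
        proof (rule key[OF y])
          show "0 \<le> Dm / 2^k * c" using Dmpos cpos by simp
          show "\<forall>y'\<in>\<Omega>. dO y' \<le> 2 * dO y \<longrightarrow> \<bar>u y'\<bar> \<le> Dm / 2^k * c"
          proof (intro ballI impI)
            fix y' assume y': "y' \<in> \<Omega>" "dO y' \<le> 2 * dO y"
            have "dO y' \<le> Dm / 2^k" using y'(2) False by (simp add: \<delta>_def)
            then show "\<bar>u y'\<bar> \<le> Dm / 2^k * c" using IH[OF y'(1), of "Dm / 2^k"] by simp
          qed
        qed
        also have "(Dm / 2^k * c)/2 = Dm / 2^Suc k * c" by simp
        also have "Dm / 2^Suc k * c \<le> s * c" using s cpos by (intro mult_right_mono) auto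
        also have "Cp * dO y \<le> Cp * s" using s Cp1 by simp
        finally show ?thesis by (simp add: algebra_simps)
      qed
    qed
    then show "\<bar>u y\<bar> \<le> s * (2*Cp + real (Suc k) * Cp)" by (simp add: c_def algebra_simps)
  qed
qed

lemma final_bound:
  assumes x: "x \<in> \<Omega>"
  shows "\<bar>u x\<bar> \<le> dO x * (3*Cp + Cp * (ln (Dm / dO x) / ln 2))"
proof -
  define d where "d = dO x"
  have dpos: "d > 0" using d_pos[OF x] by (simp add: d_def)
  have dDm: "d \<le> Dm" using dO_le[OF x] by (simp add: d_def)
  define k where "k = nat \<lceil>log 2 (Dm/d)\<rceil>"
  have q1: "Dm/d \<ge> 1" using dDm dpos by simp
  have lg0: "log 2 (Dm/d) \<ge> 0" using q1 by simp
  have kr: "real k = of_int \<lceil>log 2 (Dm/d)\<rceil>" using lg0 by (simp add: k_def)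
  have kge: "real k \<ge> log 2 (Dm/d)" unfolding kr by (rule le_of_int_ceiling)
  have kle: "real k \<le> log 2 (Dm/d) + 1" unfolding kr by (rule of_int_ceiling_le_add_one)
  have "Dm/d \<le> 2 powr real k"
    using log_le_iff[of 2 "Dm/d" "real k"] kge dpos Dmpos by simp
  then have "Dm/d \<le> 2 ^ k" by (simp add: powr_realpow)
  then have sk: "Dm / 2^k \<le> d" using dpos by (simp add: field_simps)
  have it: "\<forall>s. Dm / 2^k \<le> s \<and> dO x \<le> s \<longrightarrow> \<bar>u x\<bar> \<le> s * (2*Cp + real k * Cp)"
    using iter[of k] x by (rule bspec)
  have "\<bar>u x\<bar> \<le> d * (2*Cp + real k * Cp)" using it[rule_format, of d] sk by (simp add: d_def)
  also have "\<dots> \<le> d * (3*Cp + Cp * (ln (Dm / d) / ln 2))"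
  proof -
    have "real k * Cp \<le> (log 2 (Dm/d) + 1) * Cp" using kle Cp1 by (intro mult_right_mono) auto
    then have "2*Cp + real k * Cp \<le> 3*Cp + Cp * (ln (Dm / d) / ln 2)"
      by (simp add: log_def algebra_simps)
    then show ?thesis using dpos by (intro mult_left_mono) auto
  qed
  finally show ?thesis by (simp add: d_def)
qed

end

lemma expand_ineq:
  fixes Cp q L l :: real
  assumes "Cp \<ge> 0" "q \<ge> 0" "L \<ge> 0" "l \<ge> 0"
  shows "3*Cp + Cp*q*(L + l) \<le> 3*Cp*(1+L)*(1+q)*(1+l)"
proof -
  have a: "0 \<le> L*q" "0 \<le> L*l" "0 \<le> q*l" "0 \<le> L*q*l" using assms by simp_all
  have "1 + q*L + q*l \<le> (1+L)*(1+q)*(1+l)"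
    using a assms by (simp add: algebra_simps)
  then have "3*Cp*(1 + q*L + q*l) \<le> 3*Cp*((1+L)*(1+q)*(1+l))" using assms by (intro mult_left_mono) auto
  moreover have "Cp*q*(L+l) \<le> 3*Cp*q*L + 3*Cp*q*l" using assms by (simp add: algebra_simps)
  ultimately show ?thesis by (simp add: algebra_simps)
qed

theorem proposition1p3:
  fixes \<Omega> :: "'a::euclidean_space set" and M :: real
  assumes "DIM('a) \<ge> 2"
    and "open \<Omega>" and "convex \<Omega>" and "bounded \<Omega>" and "\<Omega> \<noteq> {}"
    and "M > 0"
  shows "\<exists>C>0. \<forall>u :: 'a \<Rightarrow> real.
           continuous_on (closure \<Omega>) u \<and> convex_on \<Omega> u \<and>
           (\<forall>x\<in>frontier \<Omega>. u x = 0) \<and>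
           aleksandrov_det_le u \<Omega> (\<lambda>x. M * infdist x (frontier \<Omega>) ^ (DIM('a) - 2))
           \<longrightarrow> (\<forall>x\<in>\<Omega>. \<bar>u x\<bar> \<le> C * infdist x (frontier \<Omega>) *
                          (1 + \<bar>ln (infdist x (frontier \<Omega>))\<bar>))"
proof -
  define n where "n = DIM('a)"
  obtain B where B: "\<forall>x\<in>closure \<Omega>. norm x \<le> B"
    using bounded_closure[OF assms(4)] bounded_iff by metis
  define Dm where "Dm = 2 * \<bar>B\<bar> + 1"
  have Dmpos: "Dm > 0" by (simp add: Dm_def)
  have Dmb: "\<forall>x\<in>closure \<Omega>. \<forall>y\<in>closure \<Omega>. dist x y \<le> Dm"
  proof (intro ballI)
    fix x y assume "x \<in> closure \<Omega>" "y \<in> closure \<Omega>"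
    then have "norm x \<le> B" "norm y \<le> B" using B by auto
    moreover have "dist x y \<le> norm x + norm y" by (simp add: dist_norm norm_triangle_ineq4)
    ultimately show "dist x y \<le> Dm" by (simp add: Dm_def)
  qed
  define Kc where "Kc = 2 * (2 * real n)^n * M * 2^(n-1) * 6^n * Dm^(2*n-2)"
  have Kc0: "Kc \<ge> 0" using assms(6) Dmpos by (simp add: Kc_def)
  define Cp where "Cp = 1 + Kc"
  have Cp1: "Cp \<ge> 1" using Kc0 by (simp add: Cp_def)
  have CpK: "Cp ^ n > Kc"
  proof -
    have "Cp ^ 1 \<le> Cp ^ n" using Cp1 assms(1) by (intro power_increasing) (auto simp: n_def)
    then show ?thesis by (simp add: Cp_def)
  qed
  define q where "q = 1 / ln (2::real)"
  have q0: "q > 0" by (simp add: q_def)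
  define C where "C = 3 * Cp * (1 + \<bar>ln Dm\<bar>) * (1 + q)"
  have Cpos: "C > 0" using Cp1 q0 by (simp add: C_def add_pos_nonneg)
  show ?thesis
  proof (intro exI conjI allI impI ballI)
    show "C > 0" by (rule Cpos)
    fix u :: "'a \<Rightarrow> real" and x
    assume H: "continuous_on (closure \<Omega>) u \<and> convex_on \<Omega> u \<and> (\<forall>x\<in>frontier \<Omega>. u x = 0) \<and>
           aleksandrov_det_le u \<Omega> (\<lambda>x. M * infdist x (frontier \<Omega>) ^ (DIM('a) - 2))"
      and x: "x \<in> \<Omega>"
    interpret MAfull \<Omega> u M Dm Cp
      by unfold_locales (use assms H Dmpos Dmb Cp1 CpK in \<open>auto simp: Kc_def n_def\<close>)
    define d where "d = infdist x (frontier \<Omega>)"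
    have dpos: "d > 0" using d_pos[OF x] by (simp add: d_def)
    have fb: "\<bar>u x\<bar> \<le> d * (3*Cp + Cp * (ln (Dm / d) / ln 2))"
      using final_bound[OF x] by (simp add: d_def)
    have "ln (Dm / d) \<le> \<bar>ln Dm\<bar> + \<bar>ln d\<bar>" using dpos Dmpos by (simp add: ln_div)
    then have "Cp * (ln (Dm / d) / ln 2) \<le> Cp * q * (\<bar>ln Dm\<bar> + \<bar>ln d\<bar>)"
      using Cp1 q0 by (simp add: q_def divide_right_mono)
    then have "3*Cp + Cp * (ln (Dm / d) / ln 2) \<le> 3*Cp*(1+\<bar>ln Dm\<bar>)*(1+q)*(1+\<bar>ln d\<bar>)"
      using expand_ineq[of Cp q "\<bar>ln Dm\<bar>" "\<bar>ln d\<bar>"] Cp1 q0 by simp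
    then have "\<bar>u x\<bar> \<le> d * (3*Cp*(1+\<bar>ln Dm\<bar>)*(1+q)*(1+\<bar>ln d\<bar>))"
      using fb dpos by (smt (verit) mult_left_mono)
    then show "\<bar>u x\<bar> \<le> C * infdist x (frontier \<Omega>) * (1 + \<bar>ln (infdist x (frontier \<Omega>))\<bar>)"
      by (simp add: C_def d_def algebra_simps)
  qed
qed

end
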